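(* Let $G$ be a connected graph of order $n$, minimum degree $\delta \geq 3$ and maximum degree $\Delta$, and let $N = n-\Delta+\delta$. Then \[ \mu(G) \leq \frac{N(N-1)}{n(n-1)}\cdot \frac{n+2\Delta}{\delta+1} + 4 . \] Equivalently, $W(G) \le \binom{N}{2}\frac{n+2\Delta}{\delta+1} + 2n(n-1)$.
   Context: For a connected graph $G$ with vertex set $V(G)$, $d_G(u,v)$ denotes the usual shortest-path distance. The Wiener index is $W(G)=\sum_{\{u,v\}\subseteq V(G)} d_G(u,v)$ (sum over unordered pairs of distinct vertices), and the average distance of a connected graph of order $n\ge 2$ is $\mu(G)=\binom{n}{2}^{-1}W(G)$. *)

theory Defs
  imports Complex_Main
begin

definition simple_graph :: "'a set \<Rightarrow> ('a \<Rightarrow> 'a \<Rightarrow> bool) \<Rightarrow> bool" where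
  "simple_graph V E \<longleftrightarrow> finite V \<and> (\<forall>u v. E u v \<longrightarrow> u \<in> V \<and> v \<in> V)
     \<and> (\<forall>u v. E u v \<longrightarrow> E v u) \<and> (\<forall>v. \<not> E v v)"

definition is_walk :: "('a \<Rightarrow> 'a \<Rightarrow> bool) \<Rightarrow> 'a list \<Rightarrow> bool" where
  "is_walk E xs \<longleftrightarrow> xs \<noteq> [] \<and> (\<forall>i. Suc i < length xs \<longrightarrow> E (xs ! i) (xs ! Suc i))"

definition walk_betw :: "('a \<Rightarrow> 'a \<Rightarrow> bool) \<Rightarrow> 'a \<Rightarrow> 'a \<Rightarrow> nat \<Rightarrow> bool" where
  "walk_betw E u v k \<longleftrightarrow> (\<exists>xs. is_walk E xs \<and> hd xs = u \<and> last xs = v \<and> length xs = Suc k)"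

definition connected_graph :: "'a set \<Rightarrow> ('a \<Rightarrow> 'a \<Rightarrow> bool) \<Rightarrow> bool" where
  "connected_graph V E \<longleftrightarrow> V \<noteq> {} \<and> (\<forall>u\<in>V. \<forall>v\<in>V. \<exists>k. walk_betw E u v k)"

definition gdist :: "('a \<Rightarrow> 'a \<Rightarrow> bool) \<Rightarrow> 'a \<Rightarrow> 'a \<Rightarrow> nat" where
  "gdist E u v = (LEAST k. walk_betw E u v k)"

definition degree :: "'a set \<Rightarrow> ('a \<Rightarrow> 'a \<Rightarrow> bool) \<Rightarrow> 'a \<Rightarrow> nat" where
  "degree V E v = card {w \<in> V. E v w}"

definition min_degree :: "'a set \<Rightarrow> ('a \<Rightarrow> 'a \<Rightarrow> bool) \<Rightarrow> nat" where
  "min_degree V E = Min (degree V E ` V)"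

definition max_degree :: "'a set \<Rightarrow> ('a \<Rightarrow> 'a \<Rightarrow> bool) \<Rightarrow> nat" where
  "max_degree V E = Max (degree V E ` V)"

definition wiener :: "'a set \<Rightarrow> ('a \<Rightarrow> 'a \<Rightarrow> bool) \<Rightarrow> real" where
  "wiener V E = (\<Sum>u\<in>V. \<Sum>v\<in>V - {u}. real (gdist E u v)) / 2"

definition avg_dist :: "'a set \<Rightarrow> ('a \<Rightarrow> 'a \<Rightarrow> bool) \<Rightarrow> real" where
  "avg_dist V E = wiener V E / real (card V choose 2)"

end

theory Submission
  imports Defs
begin



lemma walk_betw_0: "walk_betw E u v 0 \<longleftrightarrow> u = v"
proof
  assume "walk_betw E u v 0"
  then obtain xs where "is_walk E xs" "hd xs = u" "last xs = v" "length xs = 1"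
    unfolding walk_betw_def by auto
  then show "u = v" by (cases xs) auto
next
  assume "u = v"
  then show "walk_betw E u v 0" unfolding walk_betw_def is_walk_def
    by (rule_tac x="[u]" in exI) auto
qed

lemma walk_betw_Suc: "walk_betw E u v (Suc k) \<longleftrightarrow> (\<exists>x. E u x \<and> walk_betw E x v k)"
proof
  assume "walk_betw E u v (Suc k)"
  then obtain xs where xs: "is_walk E xs" "hd xs = u" "last xs = v" "length xs = Suc (Suc k)"
    unfolding walk_betw_def by auto
  then obtain ys where ys: "xs = u # ys" by (cases xs) auto
  have "ys \<noteq> []" using xs ys by auto
  have "E u (hd ys)" using xs(1) ys \<open>ys \<noteq> []\<close> unfolding is_walk_def
    by (metis Suc_less_eq hd_conv_nth length_Cons length_greater_0_conv nth_Cons_0 nth_Cons_Suc)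
  moreover have "is_walk E ys" using xs(1) ys \<open>ys \<noteq> []\<close> unfolding is_walk_def
    by (metis Suc_less_eq length_Cons nth_Cons_Suc)
  moreover have "last ys = v" using xs ys \<open>ys \<noteq> []\<close> by auto
  moreover have "length ys = Suc k" using xs ys by auto
  ultimately show "\<exists>x. E u x \<and> walk_betw E x v k" unfolding walk_betw_def by blast
next
  assume "\<exists>x. E u x \<and> walk_betw E x v k"
  then obtain x ys where h: "E u x" "is_walk E ys" "hd ys = x" "last ys = v" "length ys = Suc k"
    unfolding walk_betw_def by auto
  have "is_walk E (u # ys)" unfolding is_walk_def
  proof (intro conjI allI impI)
    fix i assume "Suc i < length (u # ys)"
    show "E ((u # ys) ! i) ((u # ys) ! Suc i)"
    proof (cases i)
      case 0 then show ?thesis using h by (metis hd_conv_nth length_0_conv nat.distinct(1) nth_Cons_0 nth_Cons_Suc)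
    next
      case (Suc j) then show ?thesis using h \<open>Suc i < length (u # ys)\<close>
        unfolding is_walk_def by auto
    qed
  qed simp
  then show "walk_betw E u v (Suc k)" unfolding walk_betw_def using h
    by (rule_tac x="u # ys" in exI) auto
qed

lemma walk_edge: "E u v \<Longrightarrow> walk_betw E u v 1"
  by (simp add: walk_betw_Suc walk_betw_0)

lemma walk_append: "walk_betw E u v a \<Longrightarrow> walk_betw E v x b \<Longrightarrow> walk_betw E u x (a + b)"
proof (induction a arbitrary: u)
  case 0 then show ?case by (simp add: walk_betw_0)
next
  case (Suc a) then show ?case by (auto simp: walk_betw_Suc)
qed

lemma walk_split: "walk_betw E u v d \<Longrightarrow> j \<le> d \<Longrightarrow> \<exists>y. walk_betw E u y j \<and> walk_betw E y v (d - j)"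
proof (induction j arbitrary: u d)
  case 0 then show ?case by (auto simp: walk_betw_0)
next
  case (Suc j)
  then obtain d' where d: "d = Suc d'" by (cases d) auto
  with Suc.prems obtain x where "E u x" "walk_betw E x v d'" by (auto simp: walk_betw_Suc)
  with Suc.IH[of x d'] Suc.prems d obtain y where "walk_betw E x y j" "walk_betw E y v (d' - j)" by auto
  then show ?case using \<open>E u x\<close> d by (auto simp: walk_betw_Suc)
qed

lemma walk_sym:
  assumes "\<And>x y. E x y \<Longrightarrow> E y x"
  shows "walk_betw E u v k \<Longrightarrow> walk_betw E v u k"
proof (induction k arbitrary: u)
  case 0 then show ?case by (simp add: walk_betw_0)
next
  case (Suc k)
  then obtain x where "E u x" "walk_betw E x v k" by (auto simp: walk_betw_Suc)
  then have "walk_betw E v x k" using Suc.IH by blast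
  moreover have "walk_betw E x u 1" using assms \<open>E u x\<close> walk_edge by metis
  ultimately show ?case using walk_append by fastforce
qed

lemma walk_mono:
  assumes "\<And>x y. E1 x y \<Longrightarrow> E2 x y"
  shows "walk_betw E1 u v k \<Longrightarrow> walk_betw E2 u v k"
proof (induction k arbitrary: u)
  case 0 then show ?case by (simp add: walk_betw_0)
next
  case (Suc k) then show ?case using assms by (auto simp: walk_betw_Suc)
qed

lemma gdist_le: "walk_betw E u v k \<Longrightarrow> gdist E u v \<le> k"
  unfolding gdist_def by (rule Least_le)

lemma gdist_walk: "walk_betw E u v k \<Longrightarrow> walk_betw E u v (gdist E u v)"
  unfolding gdist_def by (rule LeastI)

lemma gdist_self: "gdist E u u = 0"
  using gdist_le[of E u u 0] by (simp add: walk_betw_0)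

lemma gdist_0: "walk_betw E u v k \<Longrightarrow> gdist E u v = 0 \<Longrightarrow> u = v"
  using gdist_walk[of E u v k] by (simp add: walk_betw_0)

lemma gdist_edge: "E u v \<Longrightarrow> gdist E u v \<le> 1"
  using gdist_le walk_edge by metis

lemma gdist_tri:
  assumes "walk_betw E u v a" "walk_betw E v x b"
  shows "gdist E u x \<le> gdist E u v + gdist E v x"
  using gdist_le[OF walk_append[OF gdist_walk[OF assms(1)] gdist_walk[OF assms(2)]]] .

lemma gdist_sym:
  assumes "\<And>x y. E x y \<Longrightarrow> E y x"
  shows "gdist E u v = gdist E v u"
proof -
  have "walk_betw E u v k = walk_betw E v u k" for k using walk_sym[of E, OF assms] by blast
  then have "walk_betw E u v = walk_betw E v u" by (rule ext)
  then show ?thesis unfolding gdist_def by simp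
qed

lemma gdist_mono:
  assumes "\<And>x y. E1 x y \<Longrightarrow> E2 x y" "walk_betw E1 u v k"
  shows "gdist E2 u v \<le> gdist E1 u v"
  using gdist_le[OF walk_mono[OF assms(1) gdist_walk[OF assms(2)]]] .

lemma gdist_intermediate:
  assumes "walk_betw E u v k" "j \<le> gdist E u v"
  shows "\<exists>y. gdist E u y = j \<and> walk_betw E u y j"
proof -
  let ?d = "gdist E u v"
  obtain y where y: "walk_betw E u y j" "walk_betw E y v (?d - j)"
    using walk_split[OF gdist_walk[OF assms(1)] assms(2)] by blast
  have "gdist E u y = j"
  proof (rule ccontr)
    assume "gdist E u y \<noteq> j"
    then have lt: "gdist E u y < j" using gdist_le[OF y(1)] by simp
    have "walk_betw E u v (gdist E u y + (?d - j))"
      using walk_append[OF gdist_walk[OF y(1)] y(2)] .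
    then have "?d \<le> gdist E u y + (?d - j)" by (rule gdist_le)
    then show False using lt assms(2) by linarith
  qed
  then show ?thesis using y by blast
qed

lemma walk_last_edge: "walk_betw E u y (Suc j) \<Longrightarrow> \<exists>x. E x y"
  using walk_split[of E u y "Suc j" j] by (auto simp: walk_betw_Suc walk_betw_0)




definition gfun :: "real \<Rightarrow> real \<Rightarrow> real \<Rightarrow> real" where
  "gfun m M X = (X - M + m) * (X + M) / (2 * m)"

lemma sum_D_minus: "(\<Sum>k=1..D. real (D - k)) = real D * (real D - 1) / 2"
proof (induction D)
  case 0 then show ?case by simp
next
  case (Suc D)
  have "(\<Sum>k=1..Suc D. real (Suc D - k)) = (\<Sum>k=1..D. real (Suc D - k)) + 0"
    by simp
  also have "(\<Sum>k=1..D. real (Suc D - k)) = (\<Sum>k=1..D. real (D - k) + 1)"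
    by (rule sum.cong) (auto simp: Suc_diff_le of_nat_Suc)
  also have "\<dots> = real D * (real D - 1) / 2 + real D" using Suc by (simp add: sum.distrib)
  finally show ?case by (simp add: field_simps)
qed

lemma level_bound:
  fixes P :: "'b set" and c :: "'b \<Rightarrow> real" and f :: "'b \<Rightarrow> nat"
  assumes fin: "finite P" and hP: "h \<in> P" and cm: "\<And>t. t \<in> P \<Longrightarrow> c t \<ge> m"
    and cM: "c h \<ge> M" and m0: "m > 0" and Mm: "M \<ge> m"
    and f1: "\<And>t. t \<in> P \<Longrightarrow> f t \<ge> 1"
    and cont: "\<And>t k. t \<in> P \<Longrightarrow> 1 \<le> k \<Longrightarrow> k \<le> f t \<Longrightarrow> \<exists>t'\<in>P. f t' = k"
  shows "(\<Sum>t\<in>P. c t * real (f t)) \<le> gfun m M (\<Sum>t\<in>P. c t)"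
proof -
  define D where "D = Max (f ` P)"
  have fD: "f t \<le> D" if "t \<in> P" for t using fin that unfolding D_def by simp
  obtain t0 where t0: "t0 \<in> P" "f t0 = D" unfolding D_def
  proof -
    have "Max (f ` P) \<in> f ` P" using fin hP by (intro Max_in) auto
    then show ?thesis using that unfolding D_def by (metis imageE)
  qed
  have D1: "D \<ge> 1" using f1 t0 by force
  define u where "u k = (if k = f h then h else (SOME t. t \<in> P \<and> f t = k))" for k
  have u: "u k \<in> P \<and> f (u k) = k" if "k \<in> {1..D}" for k
  proof (cases "k = f h")
    case True then show ?thesis using hP u_def by simp
  next
    case False
    have "\<exists>t. t \<in> P \<and> f t = k" using cont[OF t0(1), of k] that t0 by auto
    then show ?thesis using False u_def by (metis (mono_tags, lifting) someI_ex)
  qed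
  have inj: "inj_on u {1..D}" by (rule inj_onI) (metis u)
  define U where "U = u ` {1..D}"
  have UP: "U \<subseteq> P" using u U_def by auto
  have fh: "f h \<in> {1..D}" using f1 fD hP by auto
  have cnn: "\<And>t. t \<in> P \<Longrightarrow> c t \<ge> 0" using cm m0 by force
  define X where "X = (\<Sum>t\<in>P. c t)"
  define A where "A = (\<Sum>k=1..D. c (u k))"
  have AU: "A = (\<Sum>t\<in>U. c t)" unfolding A_def U_def using sum.reindex[OF inj, of c] by (simp add: comp_def)
  have XA: "X = A + (\<Sum>t\<in>P-U. c t)" unfolding X_def AU
    using sum.subset_diff[OF UP fin, of c] by linarith
  have A_ge: "A \<ge> (real D - 1) * m + M"
  proof -
    have "A = c (u (f h)) + (\<Sum>k\<in>{1..D}-{f h}. c (u k))" unfolding A_def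
      using sum.remove[OF _ fh] by simp
    moreover have "c (u (f h)) = c h" by (simp add: u_def)
    moreover have "(\<Sum>k\<in>{1..D}-{f h}. c (u k)) \<ge> (\<Sum>k\<in>{1..D}-{f h}. m)"
      by (rule sum_mono) (use u cm in auto)
    moreover have "(\<Sum>k\<in>{1..D}-{f h}. m) = (real D - 1) * m"
      using fh by (simp add: card_Diff_singleton of_nat_diff)
    ultimately show ?thesis using cM by linarith
  qed
  have S1: "(\<Sum>t\<in>P. c t * real (f t)) = (\<Sum>t\<in>U. c t * real (f t)) + (\<Sum>t\<in>P-U. c t * real (f t))"
    using sum.subset_diff[OF UP fin, of "\<lambda>t. c t * real (f t)"] by linarith
  have S2: "(\<Sum>t\<in>U. c t * real (f t)) = (\<Sum>k=1..D. c (u k) * real k)"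
  proof -
    have "(\<Sum>t\<in>U. c t * real (f t)) = (\<Sum>k=1..D. c (u k) * real (f (u k)))"
      unfolding U_def using sum.reindex[OF inj, of "\<lambda>t. c t * real (f t)"] by (simp add: comp_def)
    also have "\<dots> = (\<Sum>k=1..D. c (u k) * real k)"
      by (rule sum.cong) (use u in auto)
    finally show ?thesis .
  qed
  have S3: "(\<Sum>t\<in>P-U. c t * real (f t)) \<le> (\<Sum>t\<in>P-U. c t * real D)"
    by (rule sum_mono) (use fD cnn in \<open>auto intro: mult_left_mono\<close>)
  have S4: "(\<Sum>t\<in>P-U. c t * real D) = (X - A) * real D"
    using XA by (simp add: sum_distrib_right)
  have S5: "(\<Sum>k=1..D. c (u k) * real k) = A * real D - (\<Sum>k=1..D. c (u k) * real (D - k))"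
  proof -
    have "(\<Sum>k=1..D. c (u k) * real k) = (\<Sum>k=1..D. c (u k) * real D - c (u k) * real (D - k))"
      by (rule sum.cong) (auto simp: of_nat_diff right_diff_distrib)
    also have "\<dots> = (\<Sum>k=1..D. c (u k) * real D) - (\<Sum>k=1..D. c (u k) * real (D - k))"
      by (rule sum_subtractf)
    also have "(\<Sum>k=1..D. c (u k) * real D) = A * real D" unfolding A_def by (rule sum_distrib_right[symmetric])
    finally show ?thesis .
  qed
  have S6: "(\<Sum>k=1..D. c (u k) * real (D - k)) \<ge> (\<Sum>k=1..D. m * real (D - k))"
    by (rule sum_mono) (use u cm in \<open>auto intro: mult_right_mono\<close>)
  have S7: "(\<Sum>k=1..D. m * real (D - k)) = m * (real D * (real D - 1) / 2)"
    by (subst sum_distrib_left[symmetric]) (rule arg_cong[OF sum_D_minus])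
  have main: "(\<Sum>t\<in>P. c t * real (f t)) \<le> X * real D - m * (real D * (real D - 1) / 2)"
    using S1 S2 S3 S4 S5 S6 S7 left_diff_distrib[of X A "real D"] by linarith
  have XA2: "X \<ge> (real D - 1) * m + M" using A_ge XA sum_nonneg[of "P-U" c] cnn by force
  have alg: "X * real D - m * (real D * (real D - 1) / 2) \<le> gfun m M X"
  proof -
    define Y where "Y = X - M + m"
    define a where "a = m * real D"
    have Ya: "Y - a \<ge> 0" using XA2 unfolding Y_def a_def by (simp add: algebra_simps)
    have g2: "2 * m * gfun m M X = (X - M + m) * (X + M)" unfolding gfun_def using m0 by simp
    have "2 * m * (gfun m M X - (X * real D - m * (real D * (real D - 1) / 2)))
        = (X - M + m) * (X + M) - 2 * m * (X * real D) + m * m * (real D * (real D - 1))"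
      using g2 by (simp add: right_diff_distrib)
    also have "\<dots> = (Y - a)^2 + (2*M - m) * (Y - a)"
      unfolding Y_def a_def by (simp add: power2_eq_square algebra_simps)
    also have "\<dots> \<ge> 0" using Ya Mm m0 by (simp add: mult_nonneg_nonneg)
    finally have "2 * m * (gfun m M X - (X * real D - m * (real D * (real D - 1) / 2))) \<ge> 0" .
    then show ?thesis using m0 by (simp add: zero_le_mult_iff)
  qed
  show ?thesis using main alg X_def by simp
qed




definition Phi :: "real \<Rightarrow> real \<Rightarrow> real \<Rightarrow> real" where
  "Phi m M x = (x^3/3 + m*x^2/2 + (m*M - M^2)*x)/(2*m) - x^2/4 - m*x/6"

lemma Phi_step:
  assumes "X \<ge> 0" "c \<ge> m" "m > 0"
  shows "c * gfun m M X \<le> Phi m M (X + c) - Phi m M X"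
proof -
  have "Phi m M (X + c) - Phi m M X - c * gfun m M X
      = X*c*(c-m)/(2*m) + c*(c-m)*(c+m)/(6*m)"
    unfolding Phi_def gfun_def using assms(3)
    by (simp add: field_simps power2_eq_square power3_eq_cube)
  moreover have "X*c*(c-m)/(2*m) \<ge> 0" using assms by simp
  moreover have "c*(c-m)*(c+m)/(6*m) \<ge> 0" using assms by simp
  ultimately show ?thesis by linarith
qed

lemma Phi_mono:
  assumes "y \<ge> M" "M \<ge> m" "m > 0"
  shows "Phi m M y \<ge> Phi m M M"
proof -
  define t where "t = y - M"
  have t0: "t \<ge> 0" using assms t_def by simp
  have "2 * m * (Phi m M y - Phi m M M) = M*t^2 + t^3/3 + m*M*t - m^2*t/3"
    unfolding Phi_def t_def using assms(3)
    by (simp add: field_simps power2_eq_square power3_eq_cube)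
  moreover have "M*t^2 \<ge> 0" "t^3/3 \<ge> 0" using t0 assms by auto
  moreover have "m*M*t \<ge> m^2*t/3"
  proof -
    have "m*M*t \<ge> m*m*t" using assms t0 by (simp add: mult_left_mono mult_right_mono)
    moreover have "m*m*t \<ge> m^2*t/3" using assms t0 by (simp add: power2_eq_square)
    ultimately show ?thesis by linarith
  qed
  ultimately have "2 * m * (Phi m M y - Phi m M M) \<ge> 0" by linarith
  then show ?thesis using assms(3) by (simp add: zero_le_mult_iff)
qed

definition FT :: "('a \<Rightarrow> 'a \<Rightarrow> bool) \<Rightarrow> 'a set \<Rightarrow> 'a \<Rightarrow> 'a \<Rightarrow> bool" where
  "FT F T a b \<longleftrightarrow> F a b \<and> a \<in> T \<and> b \<in> T"

definition downclosed :: "'a set \<Rightarrow> ('a \<Rightarrow> nat) \<Rightarrow> 'a set \<Rightarrow> bool" where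
  "downclosed S r T \<longleftrightarrow> (\<forall>s\<in>T. \<forall>s'\<in>S. r s' < r s \<longrightarrow> s' \<in> T)"

lemma FT_sym: "(\<And>x y. F x y \<Longrightarrow> F y x) \<Longrightarrow> FT F T a b \<Longrightarrow> FT F T b a"
  unfolding FT_def by blast

lemma FT_conn:
  assumes Fsym: "\<And>x y. F x y \<Longrightarrow> F y x"
    and par: "\<And>s. s \<in> S \<Longrightarrow> s \<noteq> w \<Longrightarrow> \<exists>s'\<in>S. F s s' \<and> r s' < r s"
    and TS: "T \<subseteq> S" and wT: "w \<in> T" and dc: "downclosed S r T"
  shows "t \<in> T \<Longrightarrow> \<exists>k. walk_betw (FT F T) w t k"
proof (induction "r t" arbitrary: t rule: less_induct)
  case less
  show ?case
  proof (cases "t = w")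
    case True then show ?thesis using walk_betw_0 by metis
  next
    case False
    then obtain s' where s': "s' \<in> S" "F t s'" "r s' < r t" using par less.prems TS by blast
    then have "s' \<in> T" using dc less.prems unfolding downclosed_def by blast
    then obtain k where "walk_betw (FT F T) w s' k" using less s' by blast
    moreover have "FT F T s' t" using s' \<open>s' \<in> T\<close> less.prems Fsym unfolding FT_def by blast
    ultimately show ?thesis using walk_append walk_edge by metis
  qed
qed

lemma FT_conn2:
  assumes Fsym: "\<And>x y. F x y \<Longrightarrow> F y x"
    and par: "\<And>s. s \<in> S \<Longrightarrow> s \<noteq> w \<Longrightarrow> \<exists>s'\<in>S. F s s' \<and> r s' < r s"
    and TS: "T \<subseteq> S" and wT: "w \<in> T" and dc: "downclosed S r T"
    and "s \<in> T" "t \<in> T"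
  shows "\<exists>k. walk_betw (FT F T) s t k"
proof -
  obtain a b where "walk_betw (FT F T) w s a" "walk_betw (FT F T) w t b"
    using FT_conn[OF assms(1-5)] assms(6,7) by blast
  then have "walk_betw (FT F T) s w a" using walk_sym[of "FT F T"] FT_sym[of F T] Fsym by blast
  then show ?thesis using walk_append[OF _ \<open>walk_betw (FT F T) w t b\<close>] by blast
qed




lemma double_sum_split:
  fixes q :: "'a \<Rightarrow> 'a \<Rightarrow> real"
  assumes "finite T" "v \<in> T" "\<And>s t. q s t = q t s" "q v v = 0"
  shows "(\<Sum>s\<in>T. \<Sum>t\<in>T. q s t) = (\<Sum>s\<in>T-{v}. \<Sum>t\<in>T-{v}. q s t) + 2 * (\<Sum>t\<in>T-{v}. q v t)"
proof -
  have fin: "finite (T - {v})" using assms by simp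
  have "(\<Sum>s\<in>T. \<Sum>t\<in>T. q s t) = (\<Sum>s\<in>T. q s v + (\<Sum>t\<in>T-{v}. q s t))"
    by (rule sum.cong) (auto simp: sum.remove[OF assms(1,2)])
  also have "\<dots> = (\<Sum>s\<in>T. q s v) + (\<Sum>s\<in>T. \<Sum>t\<in>T-{v}. q s t)" by (simp add: sum.distrib)
  also have "(\<Sum>s\<in>T. q s v) = q v v + (\<Sum>s\<in>T-{v}. q s v)" by (simp add: sum.remove[OF assms(1,2)])
  also have "(\<Sum>s\<in>T. \<Sum>t\<in>T-{v}. q s t) = (\<Sum>t\<in>T-{v}. q v t) + (\<Sum>s\<in>T-{v}. \<Sum>t\<in>T-{v}. q s t)"
    by (simp add: sum.remove[OF assms(1,2)])
  also have "(\<Sum>s\<in>T-{v}. q s v) = (\<Sum>t\<in>T-{v}. q v t)" using assms(3) by simp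
  finally show ?thesis using assms(4) by linarith
qed

lemma cluster_bound:
  fixes F :: "'a \<Rightarrow> 'a \<Rightarrow> bool" and c :: "'a \<Rightarrow> real"
  assumes Fsym: "\<And>x y. F x y \<Longrightarrow> F y x"
    and Firr: "\<And>x y. F x y \<Longrightarrow> x \<noteq> y"
    and par: "\<And>s. s \<in> S \<Longrightarrow> s \<noteq> w \<Longrightarrow> \<exists>s'\<in>S. F s s' \<and> r s' < r s"
    and r0: "\<And>s. s \<in> S \<Longrightarrow> r s = 0 \<Longrightarrow> s = w" and rw: "r w = 0"
    and cm: "\<And>s. s \<in> S \<Longrightarrow> c s \<ge> m" and cw: "c w \<ge> M"
    and m0: "m > 0" and Mm: "M \<ge> m"
  shows "finite T \<Longrightarrow> T \<subseteq> S \<Longrightarrow> w \<in> T \<Longrightarrow> downclosed S r T \<Longrightarrow>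
    (\<Sum>s\<in>T. \<Sum>t\<in>T. c s * c t * real (gdist (FT F T) s t)) \<le> 2 * (Phi m M (\<Sum>s\<in>T. c s) - Phi m M M)"
proof (induction "card T" arbitrary: T rule: less_induct)
  case less
  note T = less.prems
  show ?case
  proof (cases "T = {w}")
    case True
    have "Phi m M (c w) \<ge> Phi m M M" using Phi_mono[OF cw Mm m0] .
    then show ?thesis using True by (simp add: gdist_self)
  next
    case False
    obtain t1 where t1: "t1 \<in> T" "t1 \<noteq> w" using False T(3) by blast
    obtain v where v: "v \<in> T" "\<And>t. t \<in> T \<Longrightarrow> r t \<le> r v"
    proof -
      have "Max (r ` T) \<in> r ` T" using T(1,3) by (intro Max_in) auto
      then obtain v where "v \<in> T" "r v = Max (r ` T)" by (metis imageE)
      moreover have "\<And>t. t \<in> T \<Longrightarrow> r t \<le> Max (r ` T)" using T(1) by simp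
      ultimately show ?thesis using that by metis
    qed
    have "r t1 > 0" using r0 t1 T(2) by blast
    then have "r v > 0" using v(2)[OF t1(1)] by linarith
    then have vw: "v \<noteq> w" using rw by auto
    define T' where "T' = T - {v}"
    have T'fin: "finite T'" using T(1) T'_def by simp
    have T'S: "T' \<subseteq> S" using T(2) T'_def by auto
    have wT': "w \<in> T'" using T(3) vw T'_def by auto
    have dc': "downclosed S r T'" unfolding downclosed_def T'_def
    proof (intro ballI impI)
      fix s s' assume "s \<in> T - {v}" "s' \<in> S" "r s' < r s"
      then have "s' \<in> T" using T(4) unfolding downclosed_def by blast
      moreover have "s' \<noteq> v" using v(2) \<open>s \<in> T - {v}\<close> \<open>r s' < r s\<close> by force
      ultimately show "s' \<in> T - {v}" by blast
    qed
    have card': "card T' < card T" unfolding T'_def by (rule card_Diff1_less[OF T(1) v(1)])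
    have IH: "(\<Sum>s\<in>T'. \<Sum>t\<in>T'. c s * c t * real (gdist (FT F T') s t)) \<le> 2 * (Phi m M (\<Sum>s\<in>T'. c s) - Phi m M M)"
      using less.hyps[OF card' T'fin T'S wT' dc'] .
    define d where "d s t = real (gdist (FT F T) s t)" for s t
    have dsym: "d s t = d t s" for s t unfolding d_def
      using gdist_sym[of "FT F T"] FT_sym[of F T] Fsym by metis
    have mono_FT: "FT F T' x y \<Longrightarrow> FT F T x y" for x y unfolding FT_def T'_def by auto
    have dle: "d s t \<le> real (gdist (FT F T') s t)" if st: "s \<in> T'" "t \<in> T'" for s t
    proof -
      obtain k where "walk_betw (FT F T') s t k" using FT_conn2[OF Fsym par T'S wT' dc' st] by blast
      then show ?thesis unfolding d_def using gdist_mono[OF mono_FT] by (simp add: gdist_mono mono_FT)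
    qed
    have split: "(\<Sum>s\<in>T. \<Sum>t\<in>T. c s * c t * d s t) =
        (\<Sum>s\<in>T'. \<Sum>t\<in>T'. c s * c t * d s t) + 2 * (\<Sum>t\<in>T'. c v * c t * d v t)"
      unfolding T'_def by (rule double_sum_split[OF T(1) v(1)]) (auto simp: dsym d_def gdist_self)
    have part1: "(\<Sum>s\<in>T'. \<Sum>t\<in>T'. c s * c t * d s t) \<le> (\<Sum>s\<in>T'. \<Sum>t\<in>T'. c s * c t * real (gdist (FT F T') s t))"
    proof (intro sum_mono)
      fix s t assume "s \<in> T'" "t \<in> T'"
      then have "c s * c t \<ge> 0" using cm T'S m0 by (meson less_le_trans mult_nonneg_nonneg order_less_imp_le subsetD)
      then show "c s * c t * d s t \<le> c s * c t * real (gdist (FT F T') s t)"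
        using dle[OF \<open>s \<in> T'\<close> \<open>t \<in> T'\<close>] by (simp add: mult_left_mono)
    qed
    have vconn: "\<exists>k. walk_betw (FT F T) v t k" if tT: "t \<in> T" for t
      using FT_conn2[OF Fsym par T(2) T(3) T(4) v(1) tT] .
    have per: "(\<Sum>t\<in>T'. c t * real (gdist (FT F T) v t)) \<le> gfun m M (\<Sum>t\<in>T'. c t)"
    proof (rule level_bound[where c=c and f="gdist (FT F T) v", OF T'fin wT' _ cw m0 Mm])
      show "\<And>t. t \<in> T' \<Longrightarrow> m \<le> c t" using cm T'S by blast
    next
      fix t assume t: "t \<in> T'"
      then obtain k where k: "walk_betw (FT F T) v t k" using vconn T'_def by blast
      have "t \<noteq> v" using t T'_def by simp
      then show "1 \<le> gdist (FT F T) v t" using gdist_0[OF k] by (cases "gdist (FT F T) v t") auto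
    next
      fix t k assume t: "t \<in> T'" and k: "1 \<le> k" "k \<le> gdist (FT F T) v t"
      obtain k0 where k0: "walk_betw (FT F T) v t k0" using vconn t T'_def by blast
      obtain y where y: "gdist (FT F T) v y = k" "walk_betw (FT F T) v y k"
        using gdist_intermediate[OF k0 k(2)] by blast
      obtain j where "k = Suc j" using k(1) by (cases k) auto
      then obtain x where "FT F T x y" using walk_last_edge y(2) by metis
      then have "y \<in> T" unfolding FT_def by blast
      moreover have "y \<noteq> v" using y(1) k(1) gdist_self[of "FT F T" v] by auto
      ultimately show "\<exists>t'\<in>T'. gdist (FT F T) v t' = k" using y(1) T'_def by blast
    qed
    have part2: "(\<Sum>t\<in>T'. c v * c t * d v t) = c v * (\<Sum>t\<in>T'. c t * real (gdist (FT F T) v t))"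
      unfolding d_def by (simp add: sum_distrib_left mult.assoc)
    have X0: "(\<Sum>t\<in>T'. c t) \<ge> 0" using cm T'S m0 by (meson less_le_trans order_less_imp_le subsetD sum_nonneg)
    have cvm: "c v \<ge> m" using cm v(1) T(2) by blast
    have step: "c v * gfun m M (\<Sum>t\<in>T'. c t) \<le> Phi m M ((\<Sum>t\<in>T'. c t) + c v) - Phi m M (\<Sum>t\<in>T'. c t)"
      using Phi_step[OF X0 cvm m0] .
    have Xsum: "(\<Sum>s\<in>T. c s) = (\<Sum>t\<in>T'. c t) + c v"
      unfolding T'_def using sum.remove[OF T(1) v(1), of c] by simp
    have "c v * (\<Sum>t\<in>T'. c t * real (gdist (FT F T) v t)) \<le> c v * gfun m M (\<Sum>t\<in>T'. c t)"
      using per cvm m0 by (simp add: mult_left_mono)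
    then show ?thesis unfolding Xsum using split part1 part2 IH step unfolding d_def by (smt (verit))
  qed
qed




lemma packing_exists:
  fixes dd :: "'a \<Rightarrow> 'a \<Rightarrow> nat" and r :: "'a \<Rightarrow> nat"
  assumes fin: "finite V" and wV: "w \<in> V" and dsym: "\<And>x y. dd x y = dd y x"
    and dself: "\<And>x. dd x x = 0" and rw: "r w = 0"
  shows "\<exists>S. S \<subseteq> V \<and> w \<in> S \<and> (\<forall>s\<in>S. \<forall>t\<in>S. s \<noteq> t \<longrightarrow> dd s t \<ge> 3)
             \<and> (\<forall>v\<in>V. \<exists>s\<in>S. dd v s \<le> 2 \<and> r s \<le> r v)"
proof -
  define R where "R = Max (r ` V)"
  have rR: "r x \<le> R" if "x \<in> V" for x using fin that unfolding R_def by simp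
  define B where "B = card V + 1"
  define pot where "pot S = (\<Sum>s\<in>S. B ^ (R - r s))" for S
  define P where "P S \<longleftrightarrow> S \<subseteq> V \<and> w \<in> S \<and> (\<forall>s\<in>S. \<forall>t\<in>S. s \<noteq> t \<longrightarrow> dd s t \<ge> 3)" for S
  have P1: "P {w}" unfolding P_def using wV by auto
  have bound: "\<forall>S. P S \<longrightarrow> pot S < pot V + 1"
  proof (intro allI impI)
    fix S assume "P S"
    then have "pot S \<le> pot V" unfolding pot_def P_def by (intro sum_mono2[OF fin]) auto
    then show "pot S < pot V + 1" by simp
  qed
  obtain S where PS: "P S" and Smax: "\<And>S'. P S' \<Longrightarrow> pot S' \<le> pot S"
    using ex_has_greatest_nat[OF P1 bound] by blast
  have SV: "S \<subseteq> V" and wS: "w \<in> S" and pk: "\<forall>s\<in>S. \<forall>t\<in>S. s \<noteq> t \<longrightarrow> dd s t \<ge> 3"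
    using PS unfolding P_def by auto
  have finS: "finite S" using SV fin finite_subset by blast
  have cover: "\<forall>v\<in>V. \<exists>s\<in>S. dd v s \<le> 2 \<and> r s \<le> r v"
  proof (rule ccontr)
    assume "\<not> ?thesis"
    then obtain v where vV: "v \<in> V" and nc: "\<And>s. s \<in> S \<Longrightarrow> dd v s \<le> 2 \<Longrightarrow> r v < r s"
      by (meson not_le)
    define T where "T = {s \<in> S. dd v s \<le> 2}"
    have TS: "T \<subseteq> S" unfolding T_def by auto
    have finT: "finite T" using finS TS finite_subset by blast
    have wT: "w \<notin> T" using nc rw unfolding T_def by fastforce
    have vS: "v \<notin> S - T" unfolding T_def using dself by auto
    define S' where "S' = insert v (S - T)"
    have PS': "P S'" unfolding P_def S'_def
    proof (intro conjI ballI impI)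
      show "insert v (S - T) \<subseteq> V" using SV vV by auto
      show "w \<in> insert v (S - T)" using wS wT by auto
    next
      fix s t assume "s \<in> insert v (S - T)" "t \<in> insert v (S - T)" "s \<noteq> t"
      then show "dd s t \<ge> 3" using pk dsym unfolding T_def by (auto simp: not_le)
    qed
    have potS': "pot S' = B ^ (R - r v) + pot (S - T)"
      unfolding pot_def S'_def using finS vS by simp
    have potS: "pot S = pot T + pot (S - T)"
      unfolding pot_def using sum.subset_diff[OF TS finS, of "\<lambda>s. B ^ (R - r s)"] by simp
    have potT: "pot T < B ^ (R - r v)"
    proof (cases "T = {}")
      case True then show ?thesis unfolding pot_def B_def by simp
    next
      case False
      then obtain s0 where "s0 \<in> T" by blast
      then have "r v < r s0" "r s0 \<le> R" using nc rR SV unfolding T_def by auto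
      then have Rv: "R - r v = Suc (R - r v - 1)" by simp
      have each: "B ^ (R - r s) \<le> B ^ (R - r v - 1)" if "s \<in> T" for s
      proof -
        have "r v < r s" "r s \<le> R" using that nc rR SV unfolding T_def by auto
        then have "R - r s \<le> R - r v - 1" by simp
        then show ?thesis unfolding B_def by (simp add: power_increasing)
      qed
      have "pot T \<le> card T * B ^ (R - r v - 1)"
        unfolding pot_def using sum_bounded_above[of T "\<lambda>s. B ^ (R - r s)" "B ^ (R - r v - 1)"] each by simp
      also have "card T \<le> card V" using TS SV fin by (meson card_mono order_trans)
      then have "card T * B ^ (R - r v - 1) < B * B ^ (R - r v - 1)"
        unfolding B_def by (intro mult_strict_right_mono) auto
      also have "B * B ^ (R - r v - 1) = B ^ (R - r v)" using Rv by (metis power_Suc)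
      finally show ?thesis .
    qed
    have "pot S' > pot S" using potS' potS potT by simp
    with Smax[OF PS'] show False by simp
  qed
  show ?thesis using SV wS pk cover by blast
qed




lemma final_poly:
  fixes n d D :: real
  assumes "n \<ge> D + 1" "D \<ge> d" "d \<ge> 3"
  shows "3 * (Phi (d+1) (D+1) n - Phi (d+1) (D+1) (D+1))
      \<le> (n - D + d) * (n - D + d - 1) * (n + 2 * D) / (2 * (d + 1))"
proof -
  define m where "m = d + 1"
  define M where "M = D + 1"
  define u where "u = n - M"
  have u0: "u \<ge> 0" and m4: "m \<ge> 4" and Mm: "M \<ge> m" using assms unfolding u_def M_def m_def by auto
  have m0: "m > 0" using m4 by simp
  have P6: "6 * m * Phi m M x = x^3 + 3*(m*M - M^2)*x - m^2*x" for x
    unfolding Phi_def using m0 by (simp add: field_simps power2_eq_square power3_eq_cube)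
  have R2: "2 * m * ((n - D + d) * (n - D + d - 1) * (n + 2 * D) / (2 * (d + 1)))
       = (n - D + d) * (n - D + d - 1) * (n + 2 * D)" unfolding m_def using assms by simp
  have id: "2 * m * ((n - D + d) * (n - D + d - 1) * (n + 2 * D) / (2 * (d + 1)) - 3 * (Phi m M n - Phi m M M))
     = (n - D + d) * (n - D + d - 1) * (n + 2 * D) - (6 * m * Phi m M n - 6 * m * Phi m M M)"
    using R2 by (simp add: right_diff_distrib)
  also have "\<dots> = (2*m-3)*u^2 + (3*M*(m-1) + (2*m-1)*(m-2))*u + m*(m-1)*(3*M-2)"
    unfolding P6 unfolding u_def m_def M_def by (simp add: algebra_simps power2_eq_square power3_eq_cube)
  finally have id: "2 * m * ((n - D + d) * (n - D + d - 1) * (n + 2 * D) / (2 * (d + 1)) - 3 * (Phi m M n - Phi m M M))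
     = (2*m-3)*u^2 + (3*M*(m-1) + (2*m-1)*(m-2))*u + m*(m-1)*(3*M-2)" .
  have "(2*m-3)*u^2 \<ge> 0" using m4 by simp
  moreover have "(3*M*(m-1) + (2*m-1)*(m-2))*u \<ge> 0" using m4 Mm u0 by simp
  moreover have "m*(m-1)*(3*M-2) \<ge> 0" using m4 Mm by simp
  ultimately have "2 * m * ((n - D + d) * (n - D + d - 1) * (n + 2 * D) / (2 * (d + 1)) - 3 * (Phi m M n - Phi m M M)) \<ge> 0"
    using id by linarith
  then show ?thesis using m4 unfolding m_def M_def by (simp add: zero_le_mult_iff)
qed




lemma fiber_sum:
  fixes h :: "'a \<Rightarrow> real"
  assumes "finite V" "finite S" "a ` V \<subseteq> S"
  shows "(\<Sum>u\<in>V. h (a u)) = (\<Sum>s\<in>S. real (card {x\<in>V. a x = s}) * h s)"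
proof -
  have "(\<Sum>u\<in>V. h (a u)) = (\<Sum>s\<in>S. \<Sum>u\<in>{x\<in>V. a x = s}. h (a u))"
    using sum.group[OF assms, of "\<lambda>u. h (a u)"] by simp
  also have "\<dots> = (\<Sum>s\<in>S. real (card {x\<in>V. a x = s}) * h s)"
    by (rule sum.cong) auto
  finally show ?thesis .
qed

theorem theorem4p1:
  fixes V :: "'a set" and E :: "'a \<Rightarrow> 'a \<Rightarrow> bool"
  assumes "simple_graph V E" and "connected_graph V E"
    and "min_degree V E \<ge> 3"
  shows "avg_dist V E \<le>
    (let n = real (card V); \<delta> = real (min_degree V E); \<Delta> = real (max_degree V E);
         N = n - \<Delta> + \<delta>
     in N * (N - 1) / (n * (n - 1)) * ((n + 2 * \<Delta>) / (\<delta> + 1)) + 4)"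
proof -
  have fin: "finite V" and EV: "\<And>u v. E u v \<Longrightarrow> u \<in> V \<and> v \<in> V"
    and Esym: "\<And>u v. E u v \<Longrightarrow> E v u" and Eirr: "\<And>v. \<not> E v v"
    using assms(1) unfolding simple_graph_def by auto
  have Vne: "V \<noteq> {}" and reach: "\<And>u v. u \<in> V \<Longrightarrow> v \<in> V \<Longrightarrow> \<exists>k. walk_betw E u v k"
    using assms(2) unfolding connected_graph_def by auto
  define \<delta> where "\<delta> = min_degree V E"
  define \<Delta> where "\<Delta> = max_degree V E"
  define n where "n = card V"
  have degmin: "degree V E v \<ge> \<delta>" if "v \<in> V" for v
    unfolding \<delta>_def min_degree_def using fin that by simp
  have degmax: "degree V E v \<le> \<Delta>" if "v \<in> V" for v
    unfolding \<Delta>_def max_degree_def using fin that by simp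
  obtain w where wV: "w \<in> V" and degw: "degree V E w = \<Delta>"
  proof -
    have "Max (degree V E ` V) \<in> degree V E ` V" using fin Vne by (intro Max_in) auto
    then show ?thesis using that unfolding \<Delta>_def max_degree_def by (metis imageE)
  qed
  have d3: "\<delta> \<ge> 3" using assms(3) \<delta>_def by simp
  have dD: "\<delta> \<le> \<Delta>" using degmin[OF wV] degw by simp
  have Dn: "\<Delta> + 1 \<le> n"
  proof -
    have "{x \<in> V. E w x} \<subseteq> V - {w}" using Eirr by auto
    then have "card {x \<in> V. E w x} \<le> card (V - {w})" using fin by (intro card_mono) auto
    moreover have "card (V - {w}) = card V - 1" using fin wV by simp
    moreover have "card V \<ge> 1" using fin wV by (metis One_nat_def Suc_leI card_gt_0_iff empty_iff)
    ultimately show ?thesis using degw unfolding degree_def n_def by linarith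
  qed
  define d where "d = gdist E"
  have dsym: "d x y = d y x" for x y unfolding d_def using gdist_sym[of E] Esym by metis
  have dself: "d x x = 0" for x unfolding d_def by (rule gdist_self)
  have dtri: "d u x \<le> d u v + d v x" if "u \<in> V" "v \<in> V" "x \<in> V" for u v x
    unfolding d_def using reach that gdist_tri by metis
  have dedge: "E u v \<Longrightarrow> d u v \<le> 1" for u v unfolding d_def by (rule gdist_edge)
  have d0: "d u v = 0 \<Longrightarrow> u \<in> V \<Longrightarrow> v \<in> V \<Longrightarrow> u = v" for u v
    unfolding d_def using reach gdist_0 by metis
  define r where "r x = d w x" for x
  obtain S where SV: "S \<subseteq> V" and wS: "w \<in> S" and pk: "\<forall>s\<in>S. \<forall>t\<in>S. s \<noteq> t \<longrightarrow> d s t \<ge> 3"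
    and cover: "\<forall>v\<in>V. \<exists>s\<in>S. d v s \<le> 2 \<and> r s \<le> r v"
    using packing_exists[OF fin wV, of d r] dsym dself unfolding r_def by (metis dself)
  have finS: "finite S" using SV fin finite_subset by blast
  define a where "a x = (SOME s. s \<in> S \<and> (\<forall>t\<in>S. d x s \<le> d x t))" for x
  have a_prop: "a x \<in> S \<and> (\<forall>t\<in>S. d x (a x) \<le> d x t)" for x
  proof -
    have "Min (d x ` S) \<in> d x ` S" using finS wS by (intro Min_in) auto
    then obtain s where "s \<in> S" "d x s = Min (d x ` S)" by (metis imageE)
    then have "s \<in> S \<and> (\<forall>t\<in>S. d x s \<le> d x t)" using finS by simp
    then show ?thesis unfolding a_def by (rule someI)
  qed
  have aS: "a x \<in> S" for x using a_prop by blast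
  have a2: "d x (a x) \<le> 2" if "x \<in> V" for x
    using cover that a_prop by (meson order_trans)
  have a_nb: "a x = s" if "s \<in> S" "x \<in> V" "x = s \<or> E s x" for s x
  proof (rule ccontr)
    assume ne: "a x \<noteq> s"
    have "d x s \<le> 1"
    proof (cases "x = s")
      case True then show ?thesis using dself by simp
    next
      case False then have "E s x" using that(3) by blast
      then show ?thesis using dedge dsym by metis
    qed
    then have "d x (a x) \<le> 1" using a_prop that(1) by (meson order_trans)
    moreover have "d s (a x) \<le> d s x + d x (a x)" using dtri[of s x "a x"] that SV aS by blast
    moreover have "d s x = d x s" using dsym by metis
    ultimately have "d s (a x) \<le> 2" using \<open>d x s \<le> 1\<close> by linarith
    moreover have "d s (a x) \<ge> 3" using pk that(1) aS ne by metis
    ultimately show False by linarith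
  qed
  define c where "c s = real (card {x\<in>V. a x = s})" for s
  have c_deg: "c s \<ge> real (degree V E s) + 1" if "s \<in> S" for s
  proof -
    have sV: "s \<in> V" using that SV by auto
    have "insert s {x \<in> V. E s x} \<subseteq> {x\<in>V. a x = s}" using a_nb[OF that] sV by auto
    then have "card (insert s {x \<in> V. E s x}) \<le> card {x\<in>V. a x = s}" using fin by (intro card_mono) auto
    moreover have "card (insert s {x \<in> V. E s x}) = card {x \<in> V. E s x} + 1" using fin Eirr by simp
    ultimately show ?thesis unfolding c_def degree_def by simp
  qed
  have cm: "c s \<ge> real \<delta> + 1" if "s \<in> S" for s using c_deg[OF that] degmin[of s] that SV by force
  have cw: "c w \<ge> real \<Delta> + 1" using c_deg[OF wS] degw by simp
  have csum: "(\<Sum>s\<in>S. c s) = real n"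
  proof -
    have "a ` V \<subseteq> S" using aS by auto
    then show ?thesis using fiber_sum[OF fin finS, of a "\<lambda>_. 1"] unfolding c_def n_def by simp
  qed
  define F where "F x y \<longleftrightarrow> x \<in> S \<and> y \<in> S \<and> x \<noteq> y \<and> d x y \<le> 3" for x y
  have Fsym: "\<And>x y. F x y \<Longrightarrow> F y x" unfolding F_def using dsym by metis
  have Firr: "\<And>x y. F x y \<Longrightarrow> x \<noteq> y" unfolding F_def by blast
  have r0: "\<And>s. s \<in> S \<Longrightarrow> r s = 0 \<Longrightarrow> s = w" unfolding r_def using d0 wV SV by blast
  have rw: "r w = 0" unfolding r_def by (rule dself)
  have par: "\<exists>s'\<in>S. F s s' \<and> r s' < r s" if sS: "s \<in> S" and sw: "s \<noteq> w" for s
  proof -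
    have sV: "s \<in> V" using sS SV by auto
    obtain k where k: "walk_betw E w s k" using reach wV sV by blast
    have rs: "walk_betw E w s (r s)" unfolding r_def d_def using gdist_walk[OF k] .
    have "r s \<noteq> 0" using r0 sS sw by blast
    then obtain j where j: "r s = Suc j" by (cases "r s") auto
    obtain p where p: "walk_betw E w p j" "walk_betw E p s (Suc j - j)"
      using walk_split[OF rs, of j] j by auto
    have Eps: "E p s" using p(2) by (simp add: walk_betw_Suc walk_betw_0)
    have pV: "p \<in> V" using EV Eps by blast
    have rp: "r p \<le> j" unfolding r_def d_def using gdist_le[OF p(1)] .
    obtain s' where s': "s' \<in> S" "d p s' \<le> 2" "r s' \<le> r p" using cover pV by blast
    have "d s s' \<le> d s p + d p s'" using dtri sV pV s'(1) SV by blast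
    moreover have "d s p \<le> 1" using dedge Esym Eps by blast
    ultimately have "d s s' \<le> 3" using s'(2) by linarith
    moreover have "r s' < r s" using s'(3) rp j by linarith
    ultimately show ?thesis unfolding F_def using s' sS by auto
  qed
  have m0: "real \<delta> + 1 > 0" by simp
  have Mm: "real \<Delta> + 1 \<ge> real \<delta> + 1" using dD by simp
  have dcS: "downclosed S r S" unfolding downclosed_def by blast
  have clu: "(\<Sum>s\<in>S. \<Sum>t\<in>S. c s * c t * real (gdist (FT F S) s t))
      \<le> 2 * (Phi (real \<delta> + 1) (real \<Delta> + 1) (\<Sum>s\<in>S. c s) - Phi (real \<delta> + 1) (real \<Delta> + 1) (real \<Delta> + 1))"
    using cluster_bound[where F=F and S=S and w=w and r=r and c=c and m="real \<delta> + 1" and M="real \<Delta> + 1", OF Fsym Firr par r0 rw cm cw m0 Mm finS order.refl wS dcS]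
    by blast
  define DD where "DD s t = gdist (FT F S) s t" for s t
  have walk3: "walk_betw (FT F S) s t k \<Longrightarrow> s \<in> S \<Longrightarrow> d s t \<le> 3 * k" for s t k
  proof (induction k arbitrary: s)
    case 0 then show ?case by (simp add: walk_betw_0 dself)
  next
    case (Suc k)
    then obtain x where x: "FT F S s x" "walk_betw (FT F S) x t k" by (auto simp: walk_betw_Suc)
    then have xS: "x \<in> S" and dsx: "d s x \<le> 3" unfolding FT_def F_def by auto
    have tS: "t \<in> S"
    proof (cases k)
      case 0 then show ?thesis using x xS by (simp add: walk_betw_0)
    next
      case (Suc j) then obtain y where "FT F S y t" using walk_last_edge x(2) by metis
      then show ?thesis unfolding FT_def by blast
    qed
    have "d s t \<le> d s x + d x t" using dtri Suc.prems SV xS tS by blast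
    then show ?case using Suc.IH[OF x(2) xS] dsx by (simp only: mult_Suc_right)
  qed
  have dDD: "d s t \<le> 3 * DD s t" if st: "s \<in> S" "t \<in> S" for s t
  proof -
    obtain k where "walk_betw (FT F S) s t k" using FT_conn2[OF Fsym par order.refl wS dcS st] by blast
    then show ?thesis unfolding DD_def using walk3 gdist_walk st(1) by metis
  qed
  have dxy: "real (d x y) \<le> 4 + 3 * real (DD (a x) (a y))" if "x \<in> V" "y \<in> V" for x y
  proof -
    have axV: "a x \<in> V" "a y \<in> V" using aS SV by auto
    have "d x y \<le> d x (a x) + d (a x) y" using dtri that axV by blast
    also have "d (a x) y \<le> d (a x) (a y) + d (a y) y" using dtri that axV by blast
    finally have "d x y \<le> d x (a x) + d (a x) (a y) + d (a y) y" by linarith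
    moreover have "d (a y) y \<le> 2" using a2[OF that(2)] dsym by metis
    moreover have "d (a x) (a y) \<le> 3 * DD (a x) (a y)" using dDD aS by blast
    ultimately have "d x y \<le> 4 + 3 * DD (a x) (a y)" using a2[OF that(1)] by linarith
    then show ?thesis by linarith
  qed
  have sum1: "(\<Sum>u\<in>V. \<Sum>v\<in>V - {u}. real (gdist E u v))
      \<le> (\<Sum>u\<in>V. \<Sum>v\<in>V - {u}. 4 + 3 * real (DD (a u) (a v)))"
    by (intro sum_mono) (use dxy in \<open>auto simp: d_def\<close>)
  have cV1: "Suc 0 \<le> card V" using fin Vne by (simp add: Suc_le_eq card_gt_0_iff)
  have sum2: "(\<Sum>u\<in>V. \<Sum>v\<in>V - {u}. 4 + 3 * real (DD (a u) (a v)))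
      = 4 * real n * (real n - 1) + 3 * (\<Sum>u\<in>V. \<Sum>v\<in>V - {u}. real (DD (a u) (a v)))"
  proof -
    have "(\<Sum>u\<in>V. \<Sum>v\<in>V - {u}. 4 + 3 * real (DD (a u) (a v)))
        = (\<Sum>u\<in>V. 4 * (real n - 1) + 3 * (\<Sum>v\<in>V - {u}. real (DD (a u) (a v))))"
      by (rule sum.cong) (auto simp: sum.distrib sum_distrib_left fin n_def card_Diff_singleton of_nat_diff cV1)
    also have "\<dots> = 4 * real n * (real n - 1) + 3 * (\<Sum>u\<in>V. \<Sum>v\<in>V - {u}. real (DD (a u) (a v)))"
      by (simp add: sum.distrib sum_distrib_left n_def)
    finally show ?thesis .
  qed
  have sum3: "(\<Sum>u\<in>V. \<Sum>v\<in>V - {u}. real (DD (a u) (a v))) \<le> (\<Sum>u\<in>V. \<Sum>v\<in>V. real (DD (a u) (a v)))"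
    by (intro sum_mono sum_mono2) (use fin in auto)
  have aVS: "a ` V \<subseteq> S" using aS by auto
  have sum4: "(\<Sum>u\<in>V. \<Sum>v\<in>V. real (DD (a u) (a v))) = (\<Sum>s\<in>S. \<Sum>t\<in>S. c s * c t * real (DD s t))"
  proof -
    have "(\<Sum>u\<in>V. \<Sum>v\<in>V. real (DD (a u) (a v))) = (\<Sum>u\<in>V. \<Sum>t\<in>S. c t * real (DD (a u) t))"
    proof (rule sum.cong)
      fix u assume "u \<in> V"
      show "(\<Sum>v\<in>V. real (DD (a u) (a v))) = (\<Sum>t\<in>S. c t * real (DD (a u) t))"
        using fiber_sum[OF fin finS aVS, of "\<lambda>t. real (DD (a u) t)"] unfolding c_def by simp
    qed simp
    also have "\<dots> = (\<Sum>s\<in>S. c s * (\<Sum>t\<in>S. c t * real (DD s t)))"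
      using fiber_sum[OF fin finS aVS, of "\<lambda>s. \<Sum>t\<in>S. c t * real (DD s t)"] unfolding c_def by simp
    also have "\<dots> = (\<Sum>s\<in>S. \<Sum>t\<in>S. c s * c t * real (DD s t))"
      by (simp add: sum_distrib_left mult.assoc)
    finally show ?thesis .
  qed
  define K where "K = (real n - real \<Delta> + real \<delta>) * (real n - real \<Delta> + real \<delta> - 1) * (real n + 2 * real \<Delta>) / (real \<delta> + 1)"
  have fp: "6 * (Phi (real \<delta> + 1) (real \<Delta> + 1) (real n) - Phi (real \<delta> + 1) (real \<Delta> + 1) (real \<Delta> + 1)) \<le> K"
  proof -
    have "3 * (Phi (real \<delta> + 1) (real \<Delta> + 1) (real n) - Phi (real \<delta> + 1) (real \<Delta> + 1) (real \<Delta> + 1))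
      \<le> (real n - real \<Delta> + real \<delta>) * (real n - real \<Delta> + real \<delta> - 1) * (real n + 2 * real \<Delta>) / (2 * (real \<delta> + 1))"
      using final_poly[of "real \<Delta>" "real n" "real \<delta>"] Dn dD d3 by simp
    also have "\<dots> = K / 2" unfolding K_def by simp
    finally show ?thesis by linarith
  qed
  define A where "A = (\<Sum>u\<in>V. \<Sum>v\<in>V - {u}. real (DD (a u) (a v)))"
  have A_le: "3 * A \<le> K"
  proof -
    have "A \<le> (\<Sum>s\<in>S. \<Sum>t\<in>S. c s * c t * real (DD s t))" unfolding A_def using sum3 sum4 by linarith
    also have "\<dots> \<le> 2 * (Phi (real \<delta> + 1) (real \<Delta> + 1) (real n) - Phi (real \<delta> + 1) (real \<Delta> + 1) (real \<Delta> + 1))"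
      using clu csum unfolding DD_def by simp
    finally show ?thesis using fp by linarith
  qed
  have W: "(\<Sum>u\<in>V. \<Sum>v\<in>V - {u}. real (gdist E u v)) \<le> 4 * real n * (real n - 1) + K"
    using sum1 sum2 A_le unfolding A_def by linarith
  have n4: "real n \<ge> 4" using Dn dD d3 by linarith
  have ev: "even (n * (n - 1))" by (cases "even n") auto
  have ch: "real (n choose 2) = real n * (real n - 1) / 2"
  proof -
    have "real (n choose 2) = real (n * (n - 1)) / 2" unfolding choose_two using ev
      by (simp add: real_of_nat_div)
    then show ?thesis using n4 by (simp add: of_nat_diff)
  qed
  have pos: "real n * (real n - 1) > 0" using n4 by simp
  have avg: "avg_dist V E = (\<Sum>u\<in>V. \<Sum>v\<in>V - {u}. real (gdist E u v)) / (real n * (real n - 1))"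
    unfolding avg_dist_def wiener_def n_def[symmetric] ch by simp
  have "avg_dist V E \<le> (4 * real n * (real n - 1) + K) / (real n * (real n - 1))"
    unfolding avg using W pos K_def by (simp add: divide_right_mono)
  also have "\<dots> = K / (real n * (real n - 1)) + 4"
  proof -
    have "(4 * real n * (real n - 1) + K) / (real n * (real n - 1)) = 4 * (real n * (real n - 1)) / (real n * (real n - 1)) + K / (real n * (real n - 1))"
      by (simp add: add_divide_distrib mult.assoc)
    also have "4 * (real n * (real n - 1)) / (real n * (real n - 1)) = 4" using pos by (simp only: nonzero_mult_div_cancel_right less_irrefl)
    finally show ?thesis by simp
  qed
  also have "K / (real n * (real n - 1)) = (real n - real \<Delta> + real \<delta>) * (real n - real \<Delta> + real \<delta> - 1) / (real n * (real n - 1)) * ((real n + 2 * real \<Delta>) / (real \<delta> + 1))"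
    unfolding K_def by simp
  finally show ?thesis unfolding Let_def n_def \<delta>_def \<Delta>_def .
qed


end
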